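(* Any Schur positive connected bipartite graph has a balanced stable bipartition, namely, the cardinalities of the two parts differ by $1$ or $0$.
   Context: A graph $G$ is Schur positive if its chromatic symmetric function $X_G=\sum_{\kappa}\prod_{v\in V(G)}x_{\kappa(v)}$ (sum over proper colorings $\kappa$) has nonnegative coefficients in the Schur basis. A stable bipartition of $G$ is a partition of $V(G)$ into two stable (independent) sets. *)

theory Defs
  imports Main "HOL-Library.FuncSet"
begin

definition simple_graph :: "'a set \<Rightarrow> ('a \<Rightarrow> 'a \<Rightarrow> bool) \<Rightarrow> bool" where
  "simple_graph V E \<longleftrightarrow> finite V \<and>
     (\<forall>u v. E u v \<longrightarrow> u \<in> V \<and> v \<in> V \<and> u \<noteq> v \<and> E v u)"

definition connected_graph :: "'a set \<Rightarrow> ('a \<Rightarrow> 'a \<Rightarrow> bool) \<Rightarrow> bool" where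
  "connected_graph V E \<longleftrightarrow> (\<forall>u\<in>V. \<forall>v\<in>V. E\<^sup>*\<^sup>* u v)"

definition stable_set :: "'a set \<Rightarrow> ('a \<Rightarrow> 'a \<Rightarrow> bool) \<Rightarrow> 'a set \<Rightarrow> bool" where
  "stable_set V E S \<longleftrightarrow> S \<subseteq> V \<and> (\<forall>u\<in>S. \<forall>v\<in>S. \<not> E u v)"

definition stable_bipartition :: "'a set \<Rightarrow> ('a \<Rightarrow> 'a \<Rightarrow> bool) \<Rightarrow> 'a set \<Rightarrow> 'a set \<Rightarrow> bool" where
  "stable_bipartition V E A B \<longleftrightarrow> A \<union> B = V \<and> A \<inter> B = {} \<and>
     stable_set V E A \<and> stable_set V E B"

definition bipartite :: "'a set \<Rightarrow> ('a \<Rightarrow> 'a \<Rightarrow> bool) \<Rightarrow> bool" where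
  "bipartite V E \<longleftrightarrow> (\<exists>A B. stable_bipartition V E A B)"

text \<open>A formal power series in the variables x_0, x_1, ... is represented by its coefficient
  function on exponent vectors alpha :: nat \<Rightarrow> nat (x^alpha = prod_i x_i^(alpha i)).\<close>

definition proper_coloring :: "'a set \<Rightarrow> ('a \<Rightarrow> 'a \<Rightarrow> bool) \<Rightarrow> ('a \<Rightarrow> nat) \<Rightarrow> bool" where
  "proper_coloring V E \<kappa> \<longleftrightarrow> (\<forall>u\<in>V. \<forall>v\<in>V. E u v \<longrightarrow> \<kappa> u \<noteq> \<kappa> v)"

text \<open>Coefficient of x^alpha in the chromatic symmetric function X_G: the number of proper
  colourings kappa : V \<rightarrow> nat with exactly alpha i vertices of colour i, for all i.\<close>
definition chrom_sym_coeff :: "'a set \<Rightarrow> ('a \<Rightarrow> 'a \<Rightarrow> bool) \<Rightarrow> (nat \<Rightarrow> nat) \<Rightarrow> int" where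
  "chrom_sym_coeff V E \<alpha> = int (card {\<kappa> \<in> V \<rightarrow>\<^sub>E (UNIV :: nat set).
       proper_coloring V E \<kappa> \<and> (\<forall>i. card {v \<in> V. \<kappa> v = i} = \<alpha> i)})"

definition partitions_of :: "nat \<Rightarrow> nat list set" where
  "partitions_of n = {la. sorted (rev la) \<and> 0 \<notin> set la \<and> sum_list la = n}"

definition young_cells :: "nat list \<Rightarrow> (nat \<times> nat) set" where
  "young_cells la = {(i, j). i < length la \<and> j < la ! i}"

definition ssyt :: "nat list \<Rightarrow> ((nat \<times> nat) \<Rightarrow> nat) \<Rightarrow> bool" where
  "ssyt la T \<longleftrightarrow> T \<in> young_cells la \<rightarrow>\<^sub>E (UNIV :: nat set) \<and>
     (\<forall>i j. (i, j + 1) \<in> young_cells la \<longrightarrow> T (i, j) \<le> T (i, j + 1)) \<and>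
     (\<forall>i j. (i + 1, j) \<in> young_cells la \<longrightarrow> T (i, j) < T (i + 1, j))"

text \<open>Coefficient of x^alpha in the Schur function s_lambda (the Kostka number K_{lambda,alpha}):
  number of SSYT of shape lambda with content alpha.\<close>
definition schur_coeff :: "nat list \<Rightarrow> (nat \<Rightarrow> nat) \<Rightarrow> int" where
  "schur_coeff la \<alpha> = int (card {T. ssyt la T \<and>
       (\<forall>k. card {c \<in> young_cells la. T c = k} = \<alpha> k)})"

text \<open>G is Schur positive: X_G is a nonnegative (integer) combination of Schur functions.
  Since X_G is homogeneous of degree |V|, only s_lambda with lambda a partition of |V| occur.\<close>
definition schur_positive :: "'a set \<Rightarrow> ('a \<Rightarrow> 'a \<Rightarrow> bool) \<Rightarrow> bool" where
  "schur_positive V E \<longleftrightarrow> (\<exists>c :: nat list \<Rightarrow> int. (\<forall>la. c la \<ge> 0) \<and>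
     (\<forall>\<alpha>. chrom_sym_coeff V E \<alpha> =
            (\<Sum>la\<in>partitions_of (card V). c la * schur_coeff la \<alpha>)))"

end

theory Submission
  imports Defs
begin

lemma cells_finite: "finite (young_cells la)"
proof -
  have "young_cells la = Sigma {..<length la} (\<lambda>i. {..<la!i})"
    unfolding young_cells_def by auto
  then show ?thesis by simp
qed

definition content :: "nat list \<Rightarrow> ((nat \<times> nat) \<Rightarrow> nat) \<Rightarrow> (nat \<Rightarrow> nat) \<Rightarrow> bool" where
  "content la T \<alpha> \<longleftrightarrow> (\<forall>k. card {c \<in> young_cells la. T c = k} = \<alpha> k)"

lemma val_le1:
  assumes "content la T \<alpha>" "\<forall>k\<ge>2. \<alpha> k = 0" "c \<in> young_cells la"
  shows "T c \<le> 1"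
proof (rule ccontr)
  assume "\<not> T c \<le> 1"
  then have "\<alpha> (T c) = 0" using assms(2) by auto
  then have "card {d \<in> young_cells la. T d = T c} = 0" using assms(1) unfolding content_def by auto
  moreover have "finite {d \<in> young_cells la. T d = T c}" using cells_finite by auto
  ultimately have "{d \<in> young_cells la. T d = T c} = {}" by simp
  then show False using assms(3) by blast
qed

lemma row_mono:
  assumes "ssyt la T" "(i, j') \<in> young_cells la" "j \<le> j'"
  shows "T (i, j) \<le> T (i, j')"
  using assms(2,3)
proof (induction j')
  case 0
  then show ?case by simp
next
  case (Suc j')
  show ?case
  proof (cases "j = Suc j'")
    case True then show ?thesis by simp
  next
    case False
    then have "j \<le> j'" using Suc by simp
    have "(i, j') \<in> young_cells la" using Suc(2) unfolding young_cells_def by auto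
    then have "T (i, j) \<le> T (i, j')" using Suc.IH \<open>j \<le> j'\<close> by simp
    also have "\<dots> \<le> T (i, Suc j')" using assms(1) Suc(2) unfolding ssyt_def by auto
    finally show ?thesis .
  qed
qed

lemma down_closed:
  fixes S :: "nat set"
  assumes "finite S" "\<forall>j\<in>S. \<forall>j'<j. j' \<in> S"
  shows "S = {..<card S}"
proof -
  have sub: "S \<subseteq> {..<card S}"
  proof
    fix j assume "j \<in> S"
    show "j \<in> {..<card S}"
    proof (rule ccontr)
      assume "j \<notin> {..<card S}"
      then have "card S \<le> j" by simp
      have "{..j} \<subseteq> S" using assms(2) \<open>j \<in> S\<close> by (auto simp: le_less)
      then have "card {..j} \<le> card S" using assms(1) card_mono by blast
      then show False using \<open>card S \<le> j\<close> by simp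
    qed
  qed
  then show ?thesis using card_subset_eq[OF _ sub] by simp
qed

lemma zeros:
  assumes "ssyt la T" "content la T \<alpha>" "\<forall>k\<ge>2. \<alpha> k = 0"
  shows "{j. (0, j) \<in> young_cells la \<and> T (0, j) = 0} = {..<\<alpha> 0}"
proof -
  let ?S = "{j. (0, j) \<in> young_cells la \<and> T (0, j) = 0}"
  have pos: "T (i, j) \<ge> 1" if "(i, j) \<in> young_cells la" "i \<ge> 1" for i j
  proof -
    obtain i' where "i = i' + 1" using \<open>i \<ge> 1\<close> by (metis add.commute le_Suc_ex)
    then have "T (i', j) < T (i, j)" using assms(1) that(1) unfolding ssyt_def by auto
    then show ?thesis by simp
  qed
  have eq: "{c \<in> young_cells la. T c = 0} = (\<lambda>j. (0, j)) ` ?S"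
  proof (rule set_eqI, rule iffI)
    fix c assume c: "c \<in> {c \<in> young_cells la. T c = 0}"
    obtain i j where cij: "c = (i, j)" by fastforce
    have "i = 0" using pos[of i j] c cij by (cases "i = 0") auto
    then show "c \<in> (\<lambda>j. (0, j)) ` ?S" using c cij by auto
  qed auto
  have fin: "finite ?S"
  proof -
    have "?S \<subseteq> snd ` young_cells la" by (auto simp: image_iff) (metis snd_conv)
    then show ?thesis using cells_finite finite_surj by blast
  qed
  have "card ?S = \<alpha> 0"
  proof -
    have "card ((\<lambda>j. (0::nat, j)) ` ?S) = card ?S" by (rule card_image) (auto simp: inj_on_def)
    then show ?thesis using eq assms(2) unfolding content_def by metis
  qed
  moreover have "?S = {..<card ?S}"
  proof (rule down_closed[OF fin], intro ballI allI impI)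
    fix j j' assume "j \<in> ?S" "j' < j"
    then have "(0, j') \<in> young_cells la" unfolding young_cells_def by auto
    moreover have "T (0, j') \<le> T (0, j)" using row_mono[OF assms(1), of 0 j j'] \<open>j \<in> ?S\<close> \<open>j' < j\<close> by auto
    ultimately show "j' \<in> ?S" using \<open>j \<in> ?S\<close> by auto
  qed
  ultimately show ?thesis by simp
qed

lemma formula:
  assumes "ssyt la T" "content la T \<alpha>" "\<forall>k\<ge>2. \<alpha> k = 0" "(i, j) \<in> young_cells la"
  shows "T (i, j) = (if i = 0 \<and> j < \<alpha> 0 then 0 else 1)"
proof -
  have le: "T (i, j) \<le> 1" using val_le1 assms(2,3,4) by blast
  have Z: "{j. (0, j) \<in> young_cells la \<and> T (0, j) = 0} = {..<\<alpha> 0}" using zeros assms(1,2,3) by blast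
  show ?thesis
  proof (cases "i = 0")
    case True
    have "j \<in> {j. (0, j) \<in> young_cells la \<and> T (0, j) = 0} \<longleftrightarrow> j \<in> {..<\<alpha> 0}" using Z by simp
    then have "T (0, j) = 0 \<longleftrightarrow> j < \<alpha> 0" using assms(4) True by simp
    then show ?thesis using le True by auto
  next
    case False
    obtain i' where "i = i' + 1" using False by (metis Suc_eq_plus1 not0_implies_Suc)
    then have "T (i', j) < T (i, j)" using assms(1) assms(4) unfolding ssyt_def by auto
    then show ?thesis using le False by auto
  qed
qed

lemma uniq:
  assumes "ssyt la T1" "content la T1 \<alpha>" "ssyt la T2" "content la T2 \<alpha>" "\<forall>k\<ge>2. \<alpha> k = 0"
  shows "T1 = T2"
proof (rule PiE_ext)
  show "T1 \<in> young_cells la \<rightarrow>\<^sub>E (UNIV :: nat set)" using assms(1) unfolding ssyt_def by auto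
  show "T2 \<in> young_cells la \<rightarrow>\<^sub>E (UNIV :: nat set)" using assms(3) unfolding ssyt_def by auto
  fix c assume "c \<in> young_cells la"
  then obtain i j where "c = (i, j)" "(i, j) \<in> young_cells la" by (cases c) auto
  then show "T1 c = T2 c" using formula[OF assms(1,2,5)] formula[OF assms(3,4,5)] by simp
qed

lemma card_le1: "\<forall>x\<in>X. \<forall>y\<in>X. x = y \<Longrightarrow> card X \<le> 1"
proof (cases "X = {}")
  case False
  assume a: "\<forall>x\<in>X. \<forall>y\<in>X. x = y"
  obtain x where "x \<in> X" using False by blast
  then have "X = {x}" using a by blast
  then show ?thesis by simp
qed simp

lemma schur_le1:
  assumes "\<forall>k\<ge>2. \<alpha> k = 0"
  shows "schur_coeff la \<alpha> \<le> 1"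
proof -
  let ?X = "{T. ssyt la T \<and> (\<forall>k. card {c \<in> young_cells la. T c = k} = \<alpha> k)}"
  have "\<forall>x\<in>?X. \<forall>y\<in>?X. x = y" using uniq[OF _ _ _ _ assms] unfolding content_def by blast
  then have "card ?X \<le> 1" by (rule card_le1)
  then show ?thesis unfolding schur_coeff_def by simp
qed


lemma schur_mono:
  fixes p q :: nat
  assumes la: "0 \<notin> set la" and pq: "q + 2 \<le> p"
    and al: "\<alpha> = (\<lambda>k. if k = 0 then p else if k = 1 then q else 0)"
    and al': "\<alpha>' = (\<lambda>k. if k = 0 then p - 1 else if k = 1 then q + 1 else 0)"
  shows "schur_coeff la \<alpha> \<le> schur_coeff la \<alpha>'"
proof (cases "schur_coeff la \<alpha> = 0")
  case True
  then show ?thesis unfolding schur_coeff_def by simp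
next
  case False
  let ?C = "young_cells la"
  have sup: "\<forall>k\<ge>2. \<alpha> k = 0" "\<forall>k\<ge>2. \<alpha>' k = 0" using al al' by auto
  have "{T. ssyt la T \<and> (\<forall>k. card {c \<in> ?C. T c = k} = \<alpha> k)} \<noteq> {}"
    using False unfolding schur_coeff_def by (metis card.empty of_nat_0)
  then obtain T where T: "ssyt la T" "content la T \<alpha>" unfolding content_def by blast
  have le1: "schur_coeff la \<alpha> \<le> 1" using schur_le1[OF sup(1)] .
  have Z: "{j. (0, j) \<in> ?C \<and> T (0, j) = 0} = {..<p}" using zeros[OF T sup(1)] al by simp
  then have row0: "(0, j) \<in> ?C" if "j < p" for j using that by blast
  have F: "T (i, j) = (if i = 0 \<and> j < p then 0 else 1)" if "(i, j) \<in> ?C" for i j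
    using formula[OF T sup(1) that] al by simp
  have rows: "i < 2" if "(i, j) \<in> ?C" for i j
  proof (rule ccontr)
    assume "\<not> i < 2"
    then have "2 < length la" using that unfolding young_cells_def by auto
    then have "la ! 1 \<in> set la" "la ! 2 \<in> set la" by auto
    then have "la ! 1 > 0" "la ! 2 > 0" using la by (metis gr0I)+
    then have c1: "(1, 0) \<in> ?C" and c2: "(2, 0) \<in> ?C"
      using \<open>2 < length la\<close> unfolding young_cells_def by auto
    have "T (0, 0) < T (0 + 1, 0)" using T(1) c1 unfolding ssyt_def by auto
    moreover have "T (1, 0) < T (1 + 1, 0)"
    proof -
      have "\<forall>i j. (i + 1, j) \<in> ?C \<longrightarrow> T (i, j) < T (i + 1, j)" using T(1) unfolding ssyt_def by blast
      then show ?thesis using c2 by (metis one_add_one)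
    qed
    ultimately have "T (2, 0) \<ge> 2" by (simp add: numeral_2_eq_2)
    then show False using val_le1[OF T(2) sup(1) c2] by simp
  qed
  have cntq: "card {c \<in> ?C. T c = 1} = q" using T(2) al unfolding content_def by auto
  have cntp: "card {c \<in> ?C. T c = 0} = p" using T(2) al unfolding content_def by auto
  have row1: "j < q" if "(1, j) \<in> ?C" for j
  proof -
    have "Pair (1::nat) ` {..j} \<subseteq> {c \<in> ?C. T c = 1}"
    proof
      fix c assume "c \<in> Pair (1::nat) ` {..j}"
      then obtain j' where "c = (1, j')" "j' \<le> j" by auto
      then have "c \<in> ?C" using that unfolding young_cells_def by auto
      then show "c \<in> {c \<in> ?C. T c = 1}" using F \<open>c = (1, j')\<close> by auto
    qed
    moreover have "finite {c \<in> ?C. T c = 1}" using cells_finite by simp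
    ultimately have "card (Pair (1::nat) ` {..j}) \<le> card {c \<in> ?C. T c = 1}" by (simp add: card_mono)
    then have "card (Pair (1::nat) ` {..j}) \<le> q" using cntq by simp
    moreover have "card (Pair (1::nat) ` {..j}) = Suc j" by (subst card_image) (auto simp: inj_on_def)
    ultimately show ?thesis by simp
  qed
  have cardC: "card ?C = p + q"
  proof -
    have "?C = {c \<in> ?C. T c = 0} \<union> {c \<in> ?C. T c = 1}"
      using val_le1[OF T(2) sup(1)] by (auto simp: le_Suc_eq)
    moreover have "card ({c \<in> ?C. T c = 0} \<union> {c \<in> ?C. T c = 1}) = p + q"
      using cntp cntq cells_finite by (subst card_Un_disjoint) auto
    ultimately show ?thesis by simp
  qed
  define T' where "T' = restrict (\<lambda>(i, j). if i = 0 \<and> j < p - 1 then 0 else (1::nat)) ?C"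
  have T'v: "T' (i, j) = (if i = 0 \<and> j < p - 1 then 0 else 1)" if "(i, j) \<in> ?C" for i j
    using that unfolding T'_def by simp
  have sT': "ssyt la T'"
    unfolding ssyt_def
  proof (intro conjI allI impI)
    show "T' \<in> ?C \<rightarrow>\<^sub>E UNIV" unfolding T'_def by simp
  next
    fix i j assume a: "(i, j + 1) \<in> ?C"
    then have "(i, j) \<in> ?C" unfolding young_cells_def by auto
    then show "T' (i, j) \<le> T' (i, j + 1)" using a T'v by auto
  next
    fix i j assume a: "(i + 1, j) \<in> ?C"
    then have "i = 0" using rows by fastforce
    then have "j < q" using row1 a by simp
    then have "(0, j) \<in> ?C" using row0 pq by simp
    then show "T' (i, j) < T' (i + 1, j)" using a T'v \<open>i = 0\<close> \<open>j < q\<close> pq by auto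
  qed
  have Z': "{c \<in> ?C. T' c = 0} = Pair (0::nat) ` {..<p - 1}"
  proof (rule set_eqI, rule iffI)
    fix c assume "c \<in> {c \<in> ?C. T' c = 0}"
    then show "c \<in> Pair (0::nat) ` {..<p - 1}" using T'v by (cases c) (auto split: if_splits)
  next
    fix c assume "c \<in> Pair (0::nat) ` {..<p - 1}"
    then obtain j where "c = (0, j)" "j < p - 1" by auto
    then show "c \<in> {c \<in> ?C. T' c = 0}" using row0[of j] T'v by auto
  qed
  have cT': "content la T' \<alpha>'"
    unfolding content_def
  proof
    fix k
    show "card {c \<in> ?C. T' c = k} = \<alpha>' k"
    proof (cases "k = 0")
      case True
      then show ?thesis using Z' al' by (simp add: card_image inj_on_def)
    next
      case k0: False
      show ?thesis
      proof (cases "k = 1")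
        case True
        have "{c \<in> ?C. T' c = 1} = ?C - {c \<in> ?C. T' c = 0}"
          using T'v by (auto simp: T'_def)
        moreover have "card (?C - {c \<in> ?C. T' c = 0}) = card ?C - (p - 1)"
          using Z' cells_finite by (subst card_Diff_subset) (auto simp: card_image inj_on_def)
        ultimately show ?thesis using True cardC al' pq by simp
      next
        case False
        have E: "{c \<in> ?C. T' c = k} = {}" using T'v k0 False by (auto simp: T'_def)
        have "\<alpha>' k = 0" using k0 False al' by simp
        then show ?thesis by (simp only: E card.empty)
      qed
    qed
  qed
  let ?X = "{T. ssyt la T \<and> (\<forall>k. card {c \<in> ?C. T c = k} = \<alpha>' k)}"
  have "?X \<subseteq> {T'}" using uniq[OF _ _ sT' cT' sup(2)] unfolding content_def by blast
  then have "finite ?X" by (rule finite_subset) simp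
  moreover have "T' \<in> ?X" using sT' cT' unfolding content_def by blast
  ultimately have "card ?X \<noteq> 0" by auto
  then have "card ?X \<ge> 1" by simp
  then have "schur_coeff la \<alpha>' \<ge> 1" unfolding schur_coeff_def by simp
  then show ?thesis using le1 by simp
qed


lemma col_le1:
  fixes \<kappa> :: "'a \<Rightarrow> nat"
  assumes "finite V" "\<forall>i. card {v \<in> V. \<kappa> v = i} = \<alpha> i" "\<forall>k\<ge>2. \<alpha> k = (0::nat)" "v \<in> V"
  shows "\<kappa> v \<le> 1"
proof (rule ccontr)
  assume "\<not> \<kappa> v \<le> 1"
  then have "card {u \<in> V. \<kappa> u = \<kappa> v} = 0" using assms(2,3) by auto
  then have "{u \<in> V. \<kappa> u = \<kappa> v} = {}" using assms(1) by simp
  then show False using assms(4) by blast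
qed

lemma col_set_finite:
  assumes "finite V" "\<forall>k\<ge>2. \<alpha> k = (0::nat)"
  shows "finite {\<kappa> \<in> V \<rightarrow>\<^sub>E (UNIV :: nat set). proper_coloring V E \<kappa> \<and> (\<forall>i. card {v \<in> V. \<kappa> v = i} = \<alpha> i)}"
proof (rule finite_subset)
  show "{\<kappa> \<in> V \<rightarrow>\<^sub>E (UNIV :: nat set). proper_coloring V E \<kappa> \<and> (\<forall>i. card {v \<in> V. \<kappa> v = i} = \<alpha> i)}
        \<subseteq> V \<rightarrow>\<^sub>E {..1}"
    using col_le1[OF assms(1) _ assms(2)] by (auto simp: PiE_iff extensional_def)
  show "finite (V \<rightarrow>\<^sub>E {..(1::nat)})" using assms(1) by (simp add: finite_PiE)
qed

lemma unbalanced_false: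
  assumes sg: "simple_graph V E" and cg: "connected_graph V E" and sp: "schur_positive V E"
    and bp: "stable_bipartition V E A B" and pq: "card B + 2 \<le> card A"
  shows False
proof -
  define p where "p = card A"
  define q where "q = card B"
  have finV: "finite V" using sg unfolding simple_graph_def by simp
  have AB: "A \<union> B = V" "A \<inter> B = {}" "stable_set V E A" "stable_set V E B"
    using bp unfolding stable_bipartition_def by auto
  have finA: "finite A" and finB: "finite B" using finV AB(1) by (auto intro: finite_subset)
  have cardV: "card V = p + q" using AB(1,2) finA finB card_Un_disjoint p_def q_def by metis
  have edge: "u \<in> V \<and> v \<in> V \<and> u \<noteq> v \<and> (u \<in> A \<longleftrightarrow> v \<notin> A)" if "E u v" for u v
  proof -
    have "u \<in> V" "v \<in> V" "u \<noteq> v" using sg that unfolding simple_graph_def by auto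
    moreover have "\<not> (u \<in> A \<and> v \<in> A)" using AB(3) that unfolding stable_set_def by auto
    moreover have "\<not> (u \<in> B \<and> v \<in> B)" using AB(4) that unfolding stable_set_def by auto
    ultimately show ?thesis using AB(1) by blast
  qed
  define \<alpha> where "\<alpha> = (\<lambda>k::nat. if k = 0 then p else if k = 1 then q else 0)"
  define \<alpha>' where "\<alpha>' = (\<lambda>k::nat. if k = 0 then p - 1 else if k = 1 then q + 1 else 0)"
  have sup: "\<forall>k\<ge>2. \<alpha> k = 0" "\<forall>k\<ge>2. \<alpha>' k = 0" unfolding \<alpha>_def \<alpha>'_def by auto
  have c1: "chrom_sym_coeff V E \<alpha> \<ge> 1"
  proof -
    define \<kappa> where "\<kappa> = restrict (\<lambda>v. if v \<in> A then 0 else (1::nat)) V"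
    have "\<kappa> \<in> V \<rightarrow>\<^sub>E UNIV" unfolding \<kappa>_def by simp
    moreover have "proper_coloring V E \<kappa>"
      unfolding proper_coloring_def \<kappa>_def using edge by auto
    moreover have "card {v \<in> V. \<kappa> v = i} = \<alpha> i" for i
    proof -
      have "{v \<in> V. \<kappa> v = i} = (if i = 0 then A else if i = 1 then B else {})"
        unfolding \<kappa>_def using AB(1,2) by auto
      then show ?thesis unfolding \<alpha>_def p_def q_def by simp
    qed
    ultimately have "\<kappa> \<in> {\<kappa> \<in> V \<rightarrow>\<^sub>E (UNIV :: nat set). proper_coloring V E \<kappa> \<and> (\<forall>i. card {v \<in> V. \<kappa> v = i} = \<alpha> i)}"
      by blast
    note kin = this
    then have "card {\<kappa> \<in> V \<rightarrow>\<^sub>E (UNIV :: nat set). proper_coloring V E \<kappa> \<and> (\<forall>i. card {v \<in> V. \<kappa> v = i} = \<alpha> i)} \<ge> 1"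
    proof -
      have "finite {\<kappa> \<in> V \<rightarrow>\<^sub>E (UNIV :: nat set). proper_coloring V E \<kappa> \<and> (\<forall>i. card {v \<in> V. \<kappa> v = i} = \<alpha> i)}"
        using col_set_finite[OF finV sup(1), of E] .
      with kin have "card {\<kappa> \<in> V \<rightarrow>\<^sub>E (UNIV :: nat set). proper_coloring V E \<kappa> \<and> (\<forall>i. card {v \<in> V. \<kappa> v = i} = \<alpha> i)} \<noteq> 0"
        by (simp only: card_0_eq) blast
      then show ?thesis by simp
    qed
    then show ?thesis unfolding chrom_sym_coeff_def by simp
  qed
  have c0: "chrom_sym_coeff V E \<alpha>' = 0"
  proof -
    have E0: "{\<kappa> \<in> V \<rightarrow>\<^sub>E (UNIV :: nat set). proper_coloring V E \<kappa> \<and> (\<forall>i. card {v \<in> V. \<kappa> v = i} = \<alpha>' i)} = {}"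
    proof (rule ccontr)
      assume "\<not> ?thesis"
      then obtain \<kappa> where k: "proper_coloring V E \<kappa>" "\<forall>i. card {v \<in> V. \<kappa> v = i} = \<alpha>' i" by blast
      have le: "\<kappa> v \<le> 1" if "v \<in> V" for v using col_le1[OF finV k(2) sup(2) that] .
      have "A \<noteq> {}" using pq p_def by auto
      then obtain a where a: "a \<in> A" by blast
      then have aV: "a \<in> V" using AB(1) by blast
      have claim: "v \<in> V \<and> (\<kappa> v = \<kappa> a \<longleftrightarrow> v \<in> A)" if "E\<^sup>*\<^sup>* a v" for v
        using that
      proof (induction rule: rtranclp_induct)
        case base
        then show ?case using a aV by simp
      next
        case (step v w)
        have e: "v \<in> V" "w \<in> V" "(v \<in> A \<longleftrightarrow> w \<notin> A)" using edge[OF step(2)] by auto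
        have "\<kappa> v \<noteq> \<kappa> w" using k(1) step(2) e unfolding proper_coloring_def by auto
        moreover have "\<kappa> v \<le> 1" "\<kappa> w \<le> 1" "\<kappa> a \<le> 1" using le e aV by auto
        ultimately show ?case using step(3) e by auto
      qed
      have "{v \<in> V. \<kappa> v = \<kappa> a} = A"
        using claim cg aV AB(1) unfolding connected_graph_def by blast
      then have "\<alpha>' (\<kappa> a) = p" using k(2) p_def by metis
      moreover have "\<kappa> a \<le> 1" using le aV by simp
      ultimately show False unfolding \<alpha>'_def using pq p_def q_def by (auto split: if_splits simp: le_Suc_eq)
    qed
    show ?thesis unfolding chrom_sym_coeff_def by (simp only: E0 card.empty of_nat_0)
  qed
  obtain c where c: "\<forall>la. c la \<ge> 0"
    "\<forall>\<alpha>. chrom_sym_coeff V E \<alpha> = (\<Sum>la\<in>partitions_of (card V). c la * schur_coeff la \<alpha>)"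
    using sp unfolding schur_positive_def by blast
  have "chrom_sym_coeff V E \<alpha> \<le> chrom_sym_coeff V E \<alpha>'"
    unfolding c(2)[rule_format]
  proof (rule sum_mono)
    fix la assume "la \<in> partitions_of (card V)"
    then have "0 \<notin> set la" unfolding partitions_of_def by simp
    then have "schur_coeff la \<alpha> \<le> schur_coeff la \<alpha>'"
      using schur_mono[OF _ _ \<alpha>_def \<alpha>'_def] pq p_def q_def by simp
    then show "c la * schur_coeff la \<alpha> \<le> c la * schur_coeff la \<alpha>'"
      using c(1) by (simp add: mult_left_mono)
  qed
  then show False using c1 c0 by simp
qed

theorem theorem3p3:
  fixes V :: "'a set" and E :: "'a \<Rightarrow> 'a \<Rightarrow> bool"
  assumes "simple_graph V E"
    and "connected_graph V E"
    and "bipartite V E"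
    and "schur_positive V E"
  shows "\<exists>A B. stable_bipartition V E A B \<and>
           (card A = card B \<or> card A = card B + 1 \<or> card B = card A + 1)"
proof -
  obtain A B where ab: "stable_bipartition V E A B" using assms(3) unfolding bipartite_def by blast
  then have ba: "stable_bipartition V E B A" unfolding stable_bipartition_def by auto
  have "\<not> card B + 2 \<le> card A" using unbalanced_false[OF assms(1,2,4) ab] by blast
  moreover have "\<not> card A + 2 \<le> card B" using unbalanced_false[OF assms(1,2,4) ba] by blast
  ultimately have "card A = card B \<or> card A = card B + 1 \<or> card B = card A + 1" by linarith
  then show ?thesis using ab by blast
qed

end
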